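(* Let $\lambda>0$, $d>0$ be constants and let $q$ be a probability measure on $(0,\infty)$ of the form $q=q_a+\sum_{r^j\in\mathcal D}p^j\delta_{r^j}$, with $q_a$ absolutely continuous w.r.t. Lebesgue measure, $\mathcal D\subset(0,\infty)$ finite, $p^j>0$, and finite mean $T_q=\int r\,q(dr)$. Let $\rho^r\ge0$ be a solution with finite mass $N=\int_0^\infty\rho^rdr>0$ of the stationary equation $\rho^r-\rho^s+\lambda q((s,r])=d\int_{(s,r]}\rho^\alpha d\alpha$ for all $0\le s<r$, and let $R_\rho=\frac1N\int_0^\infty r\rho^r\,dr$ be the mean remaining sentence time. Then $$R_\rho=\frac{T_q}{1-\hat q(d)}-\frac1d,$$ where $\hat q(d)=\int e^{-dx}q(dx)$.
   Context: $\delta_x$ denotes the Dirac measure at $x$. *)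

theory Defs
  imports "HOL-Probability.Probability"
begin

definition laplace_tr :: "real measure \<Rightarrow> real \<Rightarrow> real" where
  "laplace_tr q d = (\<integral>x. exp (- d * x) \<partial>q)"

end

theory Submission
  imports Defs
begin

lemma lim_zero:
  fixes f :: "real \<Rightarrow> real"
  assumes nn: "\<And>x. x \<ge> 0 \<Longrightarrow> f x \<ge> 0" and int: "set_integrable lborel {0..} f"
    and lim: "(f \<longlongrightarrow> L) at_top"
  shows "L = 0"
proof -
  have ev: "eventually (\<lambda>x. f x \<ge> 0) at_top"
    by (rule eventually_mono[OF eventually_ge_at_top[of 0] nn])
  have L0: "L \<ge> 0" by (rule tendsto_lowerbound[OF lim ev]) simp
  show ?thesis
  proof (rule ccontr)
    assume "L \<noteq> 0" with L0 have Lp: "L > 0" by simp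
    have "eventually (\<lambda>x. f x > L/2) at_top"
      using order_tendstoD(1)[OF lim, of "L/2"] Lp by simp
    then obtain A where A: "\<And>x. x \<ge> A \<Longrightarrow> f x > L/2"
      by (auto simp: eventually_at_top_linorder)
    define A' where "A' = max A 0"
    have A'1: "\<And>x. x \<ge> A' \<Longrightarrow> f x > L/2" using A by (simp add: A'_def)
    have A'0: "A' \<ge> 0" by (simp add: A'_def)
    define N where "N = (LBINT x:{0..}. f x)"
    have meas: "(\<lambda>x. indicator {0..} x *\<^sub>R f x) \<in> borel_measurable lborel"
      using int unfolding set_integrable_def by (rule borel_measurable_integrable)
    have NN: "(\<integral>\<^sup>+x. ennreal (indicator {0..} x * f x) \<partial>lborel) = ennreal N"
      unfolding N_def set_lebesgue_integral_def
      using int unfolding set_integrable_def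
      by (subst nn_integral_eq_integral) (auto simp: indicator_def nn)
    have "N \<ge> real n * (L/2)" for n :: nat
    proof -
      have "ennreal (real n * (L/2)) = (\<integral>\<^sup>+x. ennreal (L/2) * indicator {A'..A'+real n} x \<partial>lborel)"
        using Lp by (simp add: nn_integral_cmult ennreal_mult'[symmetric] mult.commute)
      also have "\<dots> \<le> (\<integral>\<^sup>+x. ennreal (indicator {0..} x * f x) \<partial>lborel)"
        apply (rule nn_integral_mono)
        using A'0 by (auto simp: indicator_def intro!: ennreal_leI less_imp_le[OF A'1])
      finally have "ennreal (real n * (L/2)) \<le> ennreal N" using NN by simp
      moreover have "N \<ge> 0" unfolding N_def set_lebesgue_integral_def
        by (rule integral_nonneg_AE) (simp add: indicator_def nn)
      ultimately show ?thesis by (simp add: ennreal_le_iff)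
    qed
    moreover obtain n :: nat where "real n > 2 * N / L" using reals_Archimedean2 by blast
    ultimately have "N \<ge> real n * (L/2)" and "2 * N < real n * L"
      using Lp by (auto simp: divide_less_eq)
    then show False by simp
  qed
qed

lemma key_identity:
  fixes lam d :: real and q :: "real measure" and \<rho> :: "real \<Rightarrow> real"
  assumes q_prob: "prob_space q" and q_sets: "sets q = sets borel"
    and q_support: "emeasure q {..0} = 0"
    and \<rho>_nonneg: "\<And>r. r \<ge> 0 \<Longrightarrow> \<rho> r \<ge> 0"
    and \<rho>_int: "set_integrable lborel {0..} \<rho>"
    and stationary: "\<And>s r. 0 \<le> s \<Longrightarrow> s < r \<Longrightarrow>
        \<rho> r - \<rho> s + lam * measure q {s<..r} = d * (LBINT a:{s<..r}. \<rho> a)"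
    and r0: "r \<ge> 0"
  shows "\<rho> r + d * (LBINT a:{r<..}. \<rho> a) = lam * measure q {r<..}"
proof -
  interpret q: real_distribution q
    using q_prob q_sets by (simp add: real_distribution_def real_distribution_axioms_def)
  define N where "N = (LBINT a:{0..}. \<rho> a)"
  have F0: "cdf q 0 = 0" using q_support by (simp add: cdf_def measure_def)
  have sint: "set_integrable lborel B \<rho>" if "B \<in> sets borel" "B \<subseteq> {0..}" for B
    using set_integrable_subset[OF \<rho>_int] that by simp
  have sbm: "set_borel_measurable lborel B \<rho>" if "B \<in> sets borel" "B \<subseteq> {0..}" for B
    using sint[OF that] unfolding set_integrable_def set_borel_measurable_def
    by (rule borel_measurable_integrable)
  have cong: "(LBINT a:{x<..y}. \<rho> a) = (LBINT a:{x..y}. \<rho> a)" if "x \<ge> 0" for x y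
    by (rule set_integral_cong_set[OF sbm sbm]) (use that AE_lborel_singleton[of x] in \<open>auto elim!: eventually_mono\<close>)
  have cong2: "(LBINT a:{x<..}. \<rho> a) = (LBINT a:{x..}. \<rho> a)" if "x \<ge> 0" for x
    by (rule set_integral_cong_set[OF sbm sbm]) (use that AE_lborel_singleton[of x] in \<open>auto elim!: eventually_mono\<close>)
  have eq0: "\<rho> R = \<rho> 0 + d * (LBINT a:{0..R}. \<rho> a) - lam * cdf q R" if "R > 0" for R
    using stationary[of 0 R] that cong[of 0 R] q.cdf_diff_eq[of 0 R] F0 by simp
  have lim1: "((\<lambda>R. LBINT a:{0..R}. \<rho> a) \<longlongrightarrow> N) at_top"
    unfolding N_def by (rule tendsto_set_lebesgue_integral_at_top[OF _ \<rho>_int]) simp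
  have "((\<lambda>R. \<rho> 0 + d * (LBINT a:{0..R}. \<rho> a) - lam * cdf q R) \<longlongrightarrow> \<rho> 0 + d * N - lam * 1) at_top"
    by (intro tendsto_intros lim1 q.cdf_lim_at_top_prob)
  hence "(\<rho> \<longlongrightarrow> \<rho> 0 + d * N - lam * 1) at_top"
    by (rule Lim_transform_eventually) (use eventually_gt_at_top[of 0] in \<open>eventually_elim, simp add: eq0\<close>)
  hence L: "\<rho> 0 + d * N - lam = 0" using lim_zero[OF \<rho>_nonneg \<rho>_int] by force
  have G: "measure q {r<..} = 1 - cdf q r"
    using q.prob_compl[of "{..r}"] by (simp add: cdf_def Compl_eq_Diff_UNIV[symmetric] Compl_atMost)
  show ?thesis
  proof (cases "r = 0")
    case True
    then show ?thesis using cong2[of 0] L G F0 by (simp add: N_def)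
  next
    case False
    with r0 have rp: "r > 0" by simp
    have "N = (LBINT a:{0..r}. \<rho> a) + (LBINT a:{r<..}. \<rho> a)"
    proof -
      have "{0..} = {0..r} \<union> {r<..}" using r0 by auto
      hence "N = (LBINT a:{0..r} \<union> {r<..}. \<rho> a)" by (simp add: N_def)
      also have "\<dots> = (LBINT a:{0..r}. \<rho> a) + (LBINT a:{r<..}. \<rho> a)"
        by (rule set_integral_Un) (use r0 in \<open>auto intro!: sint\<close>)
      finally show ?thesis .
    qed
    then show ?thesis using eq0[OF rp] L unfolding G right_diff_distrib by (simp add: algebra_simps)
  qed
qed

lemma pred_lt_pair[measurable]: "Measurable.pred (borel \<Otimes>\<^sub>M borel) (\<lambda>x::real\<times>real. snd x \<in> {fst x<..})"
  unfolding greaterThan_iff by measurable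

lemma general_weight:
  fixes lam d :: real and q :: "real measure" and \<rho>0 w :: "real \<Rightarrow> real" and W :: "real \<Rightarrow> ennreal"
  assumes q_prob: "prob_space q" and q_sets: "sets q = sets borel"
    and \<rho>0_meas[measurable]: "\<rho>0 \<in> borel_measurable borel"
    and \<rho>0_nn: "\<And>r. \<rho>0 r \<ge> 0"
    and w_meas[measurable]: "w \<in> borel_measurable borel"
    and w_nn: "\<And>r. w r \<ge> 0"
    and W_def: "\<And>a. W a = (\<integral>\<^sup>+ r. ennreal (indicator {0..<a} r * w r) \<partial>lborel)"
    and K: "\<And>r. r \<ge> 0 \<Longrightarrow> ennreal (\<rho>0 r) + ennreal d * (\<integral>\<^sup>+a. ennreal (indicator {r<..} a * \<rho>0 a) \<partial>lborel)
              = ennreal lam * (\<integral>\<^sup>+x. indicator {r<..} x \<partial>q)"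
  shows "(\<integral>\<^sup>+ r. ennreal (indicator {0..} r * w r * \<rho>0 r) \<partial>lborel) + ennreal d * (\<integral>\<^sup>+ a. ennreal (\<rho>0 a) * W a \<partial>lborel)
       = ennreal lam * (\<integral>\<^sup>+ x. W x \<partial>q)"
proof -
  interpret q: prob_space q by (rule q_prob)
  interpret pq: pair_sigma_finite lborel q
    by (simp add: pair_sigma_finite_def lborel.sigma_finite_measure_axioms q.sigma_finite_measure_axioms)
  have [measurable_cong]: "sets q = sets borel" by (rule q_sets)
  have "(\<integral>\<^sup>+ r. ennreal (indicator {0..} r * w r) * (ennreal (\<rho>0 r) + ennreal d * (\<integral>\<^sup>+a. ennreal (indicator {r<..} a * \<rho>0 a) \<partial>lborel)) \<partial>lborel)
      = (\<integral>\<^sup>+ r. ennreal (indicator {0..} r * w r) * (ennreal lam * (\<integral>\<^sup>+x. indicator {r<..} x \<partial>q)) \<partial>lborel)"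
    by (rule nn_integral_cong) (simp add: K split: split_indicator)
  also have "\<dots> = ennreal lam * (\<integral>\<^sup>+ r. (\<integral>\<^sup>+x. ennreal (indicator {0..} r * w r) * indicator {r<..} x \<partial>q) \<partial>lborel)"
    by (subst nn_integral_cmult[symmetric], measurable)
       (auto intro!: nn_integral_cong simp: nn_integral_cmult mult.assoc mult.left_commute)
  also have "(\<integral>\<^sup>+ r. (\<integral>\<^sup>+x. ennreal (indicator {0..} r * w r) * indicator {r<..} x \<partial>q) \<partial>lborel)
     = (\<integral>\<^sup>+x. (\<integral>\<^sup>+ r. ennreal (indicator {0..} r * w r) * indicator {r<..} x \<partial>lborel) \<partial>q)"
    by (rule pq.Fubini'[symmetric]) measurable
  also have "\<dots> = (\<integral>\<^sup>+ x. W x \<partial>q)"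
    by (auto intro!: nn_integral_cong simp: W_def indicator_def)
  finally have R: "(\<integral>\<^sup>+ r. ennreal (indicator {0..} r * w r) * (ennreal (\<rho>0 r) + ennreal d * (\<integral>\<^sup>+a. ennreal (indicator {r<..} a * \<rho>0 a) \<partial>lborel)) \<partial>lborel)
      = ennreal lam * (\<integral>\<^sup>+ x. W x \<partial>q)" .
  have "(\<integral>\<^sup>+ r. ennreal (indicator {0..} r * w r) * (ennreal (\<rho>0 r) + ennreal d * (\<integral>\<^sup>+a. ennreal (indicator {r<..} a * \<rho>0 a) \<partial>lborel)) \<partial>lborel)
    = (\<integral>\<^sup>+ r. ennreal (indicator {0..} r * w r * \<rho>0 r) \<partial>lborel)
      + ennreal d * (\<integral>\<^sup>+ r. (\<integral>\<^sup>+a. ennreal (indicator {0..} r * w r) * ennreal (indicator {r<..} a * \<rho>0 a) \<partial>lborel) \<partial>lborel)"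
  proof -
    have "(\<integral>\<^sup>+ r. ennreal (indicator {0..} r * w r) * (ennreal (\<rho>0 r) + ennreal d * (\<integral>\<^sup>+a. ennreal (indicator {r<..} a * \<rho>0 a) \<partial>lborel)) \<partial>lborel)
      = (\<integral>\<^sup>+ r. ennreal (indicator {0..} r * w r * \<rho>0 r) + ennreal d * (\<integral>\<^sup>+a. ennreal (indicator {0..} r * w r) * ennreal (indicator {r<..} a * \<rho>0 a) \<partial>lborel) \<partial>lborel)"
      apply (rule nn_integral_cong)
      apply (subst nn_integral_cmult)
       apply measurable
      apply (simp add: distrib_left ennreal_mult'[symmetric] w_nn \<rho>0_nn mult.left_commute)
      done
    also have "\<dots> = (\<integral>\<^sup>+ r. ennreal (indicator {0..} r * w r * \<rho>0 r) \<partial>lborel)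
      + ennreal d * (\<integral>\<^sup>+ r. (\<integral>\<^sup>+a. ennreal (indicator {0..} r * w r) * ennreal (indicator {r<..} a * \<rho>0 a) \<partial>lborel) \<partial>lborel)"
      apply (subst nn_integral_add)
        apply measurable
      apply (subst nn_integral_cmult)
       apply measurable
      done
    finally show ?thesis .
  qed
  also have "(\<integral>\<^sup>+ r. (\<integral>\<^sup>+a. ennreal (indicator {0..} r * w r) * ennreal (indicator {r<..} a * \<rho>0 a) \<partial>lborel) \<partial>lborel)
      = (\<integral>\<^sup>+ a. (\<integral>\<^sup>+r. ennreal (indicator {0..} r * w r) * ennreal (indicator {r<..} a * \<rho>0 a) \<partial>lborel) \<partial>lborel)"
    by (rule lborel_pair.Fubini'[symmetric]) measurable
  also have "\<dots> = (\<integral>\<^sup>+ a. ennreal (\<rho>0 a) * W a \<partial>lborel)"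
    by (auto intro!: nn_integral_cong simp: W_def nn_integral_cmult[symmetric] indicator_def mult.commute)
  finally show ?thesis using R by simp
qed

lemma W_one: "(\<integral>\<^sup>+ r. ennreal (indicator {0..<a} r * 1) \<partial>lborel) = ennreal a"
proof (cases "a \<ge> 0")
  case True
  then show ?thesis by (simp add: emeasure_lborel_Ico ennreal_indicator nn_integral_indicator)
next
  case False
  then have "{0..<a} = ({}::real set)" by auto
  with False show ?thesis by (simp add: ennreal_neg)
qed

lemma W_exp:
  fixes d :: real assumes d: "d > 0"
  shows "(\<integral>\<^sup>+ r. ennreal (indicator {0..<a} r * exp (- d * r)) \<partial>lborel) = ennreal ((1 - exp (- d * a)) / d)"
proof (cases "a \<ge> 0")
  case True
  have "(\<integral>\<^sup>+ r. ennreal (indicator {0..<a} r * exp (- d * r)) \<partial>lborel)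
      = (\<integral>\<^sup>+ r. ennreal (indicator {0..a} r * exp (- d * r)) \<partial>lborel)"
    by (rule nn_integral_cong_AE) (use AE_lborel_singleton[of a] in \<open>eventually_elim, auto simp: indicator_def\<close>)
  also have "\<dots> = ennreal ((1 - exp (- d * a)) / d)"
    apply (rule nn_integral_has_integral_lborel)
  proof -
    show "(\<lambda>r. indicator {0..a} r * exp (- d * r)) \<in> borel_measurable borel" by measurable
    show "\<And>x. 0 \<le> indicator {0..a} x * exp (- d * x)" by simp
    have "((\<lambda>r. exp (- d * r)) has_integral ((- exp (- d * a) / d) - (- exp (- d * 0) / d))) {0..a}"
      by (rule fundamental_theorem_of_calculus[OF True])
         (use d in \<open>auto intro!: derivative_eq_intros simp: has_real_derivative_iff_has_vector_derivative[symmetric]\<close>)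
    hence hI: "((\<lambda>r. exp (- d * r)) has_integral ((1 - exp (- d * a)) / d)) {0..a}"
      by (simp add: diff_divide_distrib)
    show "((\<lambda>r. indicator {0..a} r * exp (- d * r)) has_integral ((1 - exp (- d * a)) / d)) UNIV"
    proof -
      have "(\<lambda>r. indicator {0..a} r * exp (- d * r)) = (\<lambda>r. if r \<in> {0..a} then exp (- d * r) else 0)"
        by (auto simp: fun_eq_iff indicator_def)
      then show ?thesis using has_integral_restrict_UNIV[of "{0..a}" "\<lambda>r. exp (- d * r)"] hI by simp
    qed
  qed
  finally show ?thesis .
next
  case False
  then have "{0..<a} = ({}::real set)" by auto
  moreover have "(1 - exp (- d * a)) / d \<le> 0" using False d
  proof -
    have "- d * a > 0" using False d by (simp add: mult_pos_neg)
    hence "exp (- d * a) > 1" by simp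
    thus ?thesis using d by (simp add: divide_nonpos_pos)
  qed
  ultimately show ?thesis by (simp add: ennreal_neg)
qed

theorem proposition2p5:
  fixes lam d :: real
    and q qa :: "real measure"
    and D :: "real set"
    and p :: "real \<Rightarrow> real"
    and \<rho> :: "real \<Rightarrow> real"
  assumes lam_pos: "lam > 0" and d_pos: "d > 0"
    and q_prob: "prob_space q" and q_sets: "sets q = sets borel"
    and q_support: "emeasure q {..0} = 0"
    and qa_sets: "sets qa = sets borel"
    and qa_ac: "absolutely_continuous lborel qa"
    and D_fin: "finite D" and D_pos: "D \<subseteq> {0<..}"
    and p_pos: "\<And>x. x \<in> D \<Longrightarrow> p x > 0"
    and q_decomp: "\<And>A. A \<in> sets borel \<Longrightarrow>
        emeasure q A = emeasure qa A + (\<Sum>x\<in>D. ennreal (p x) * indicator A x)"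
    and q_mean: "integrable q (\<lambda>r. r)"
    and \<rho>_nonneg: "\<And>r. r \<ge> 0 \<Longrightarrow> \<rho> r \<ge> 0"
    and \<rho>_int: "set_integrable lborel {0..} \<rho>"
    and N_pos: "(LBINT r:{0..}. \<rho> r) > 0"
    and stationary: "\<And>s r. 0 \<le> s \<Longrightarrow> s < r \<Longrightarrow>
        \<rho> r - \<rho> s + lam * measure q {s<..r} = d * (LBINT a:{s<..r}. \<rho> a)"
  shows "set_integrable lborel {0..} (\<lambda>r. r * \<rho> r)
     \<and> (LBINT r:{0..}. r * \<rho> r) / (LBINT r:{0..}. \<rho> r)
         = (\<integral>r. r \<partial>q) / (1 - laplace_tr q d) - 1 / d"
proof -
  interpret q: prob_space q by (rule q_prob)
  have [measurable_cong]: "sets q = sets borel" by (rule q_sets)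
  define \<rho>0 where "\<rho>0 = (\<lambda>r. indicator {0..} r * \<rho> r)"
  define N where "N = (LBINT r:{0..}. \<rho> r)"
  define Eq where "Eq = (\<integral>r. r \<partial>q)"
  define Qh where "Qh = laplace_tr q d"
  have \<rho>0_nn: "\<And>r. \<rho>0 r \<ge> 0" by (simp add: \<rho>0_def indicator_def \<rho>_nonneg)
  have int0: "integrable lborel \<rho>0"
    using \<rho>_int by (simp add: set_integrable_def \<rho>0_def)
  have \<rho>0_meas[measurable]: "\<rho>0 \<in> borel_measurable borel"
    using borel_measurable_integrable[OF int0] by simp
  have sint: "set_integrable lborel B \<rho>" if "B \<in> sets borel" "B \<subseteq> {0..}" for B
    using set_integrable_subset[OF \<rho>_int] that by simp
  have K: "ennreal (\<rho>0 r) + ennreal d * (\<integral>\<^sup>+a. ennreal (indicator {r<..} a * \<rho>0 a) \<partial>lborel)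
              = ennreal lam * (\<integral>\<^sup>+x. indicator {r<..} x \<partial>q)" if r0: "r \<ge> 0" for r
  proof -
    define T where "T = (LBINT a:{r<..}. \<rho> a)"
    have eqf: "(\<lambda>a. indicator {r<..} a * \<rho>0 a) = (\<lambda>a. indicator {r<..} a *\<^sub>R \<rho> a)"
      using r0 by (auto simp: fun_eq_iff \<rho>0_def indicator_def)
    have intT: "integrable lborel (\<lambda>a. indicator {r<..} a *\<^sub>R \<rho> a)"
    proof -
      have "{r<..} \<subseteq> {0..}" using r0 by auto
      then show ?thesis using sint[of "{r<..}"] by (simp add: set_integrable_def)
    qed
    have T: "(\<integral>\<^sup>+a. ennreal (indicator {r<..} a * \<rho>0 a) \<partial>lborel) = ennreal T"
    proof -
      have "(\<integral>\<^sup>+a. ennreal (indicator {r<..} a * \<rho>0 a) \<partial>lborel) = (\<integral>\<^sup>+a. ennreal (indicator {r<..} a *\<^sub>R \<rho> a) \<partial>lborel)"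
        by (rule nn_integral_cong) (use r0 in \<open>auto simp: \<rho>0_def indicator_def\<close>)
      also have "\<dots> = ennreal T"
        unfolding T_def set_lebesgue_integral_def
        by (rule nn_integral_eq_integral[OF intT]) (use r0 in \<open>auto simp: indicator_def \<rho>_nonneg\<close>)
      finally show ?thesis .
    qed
    have T0: "T \<ge> 0" unfolding T_def set_lebesgue_integral_def
      by (rule integral_nonneg_AE) (use r0 in \<open>auto simp: indicator_def \<rho>_nonneg\<close>)
    have G: "(\<integral>\<^sup>+x. indicator {r<..} x \<partial>q) = ennreal (measure q {r<..})"
      by (simp add: q.emeasure_eq_measure)
    have ki: "\<rho> r + d * T = lam * measure q {r<..}"
      unfolding T_def
      by (rule key_identity[OF q_prob q_sets q_support \<rho>_nonneg \<rho>_int stationary r0])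
    have "ennreal (\<rho>0 r) + ennreal d * ennreal T = ennreal (\<rho> r + d * T)"
      using r0 T0 d_pos \<rho>_nonneg[OF r0]
      by (simp add: \<rho>0_def ennreal_plus ennreal_mult)
    also have "\<dots> = ennreal lam * ennreal (measure q {r<..})"
      using lam_pos by (simp add: ki ennreal_mult)
    finally show ?thesis using T G by simp
  qed
  have E2: "(\<integral>\<^sup>+ r. ennreal (indicator {0..} r * 1 * \<rho>0 r) \<partial>lborel) + ennreal d * (\<integral>\<^sup>+ a. ennreal (\<rho>0 a) * ennreal a \<partial>lborel)
       = ennreal lam * (\<integral>\<^sup>+ x. ennreal x \<partial>q)"
    by (rule general_weight[OF q_prob q_sets \<rho>0_meas \<rho>0_nn _ _ W_one[symmetric] K]) auto
  have E3: "(\<integral>\<^sup>+ r. ennreal (indicator {0..} r * exp (- d * r) * \<rho>0 r) \<partial>lborel)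
       + ennreal d * (\<integral>\<^sup>+ a. ennreal (\<rho>0 a) * ennreal ((1 - exp (- d * a)) / d) \<partial>lborel)
       = ennreal lam * (\<integral>\<^sup>+ x. ennreal ((1 - exp (- d * x)) / d) \<partial>q)"
    by (rule general_weight[OF q_prob q_sets \<rho>0_meas \<rho>0_nn _ _ W_exp[OF d_pos, symmetric] K]) auto
  have AEpos: "AE x in q. x > 0"
  proof -
    have "{..0} \<in> null_sets q" using q_support by (auto intro: null_setsI simp: q_sets)
    from AE_not_in[OF this] show ?thesis by (auto elim!: eventually_mono)
  qed
  have N\<rho>0: "N = integral\<^sup>L lborel \<rho>0" by (simp add: N_def set_lebesgue_integral_def \<rho>0_def)
  have Nn: "(\<integral>\<^sup>+ r. ennreal (\<rho>0 r) \<partial>lborel) = ennreal N"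
    unfolding N\<rho>0 by (rule nn_integral_eq_integral[OF int0]) (simp add: \<rho>0_nn)
  have Eqn: "(\<integral>\<^sup>+ x. ennreal x \<partial>q) = ennreal Eq"
    unfolding Eq_def by (rule nn_integral_eq_integral[OF q_mean]) (use AEpos in \<open>auto elim!: eventually_mono\<close>)
  have Eq0: "Eq \<ge> 0"
    unfolding Eq_def by (rule integral_nonneg_AE) (use AEpos in \<open>auto elim!: eventually_mono\<close>)
  have exple: "exp (- d * x) \<le> 1" if "x \<ge> 0" for x
    using d_pos that by (simp add: mult_nonneg_nonneg)
  have dx: "0 \<le> d * x" if "x > 0" for x using d_pos that by simp
  have intexp: "integrable q (\<lambda>x. exp (- d * x))"
  proof (rule q.integrable_const_bound[where B=1])
    show "AE x in q. norm (exp (- d * x)) \<le> 1"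
      using AEpos by eventually_elim (simp add: dx)
    show "(\<lambda>x. exp (- d * x)) \<in> borel_measurable q" by measurable
  qed
  have intL: "integrable q (\<lambda>x. (1 - exp (- d * x)) / d)"
    using intexp by (intro integrable_divide integrable_diff) auto
  have LapI: "(\<integral>x. (1 - exp (- d * x)) / d \<partial>q) = (1 - Qh) / d"
    using intexp by (simp add: Qh_def laplace_tr_def integral_divide_zero integral_diff q.prob_space)
  have Lapn: "(\<integral>\<^sup>+ x. ennreal ((1 - exp (- d * x)) / d) \<partial>q) = ennreal ((1 - Qh) / d)"
    unfolding LapI[symmetric]
    by (rule nn_integral_eq_integral[OF intL]) (use AEpos in \<open>eventually_elim, use dx d_pos in simp\<close>)
  have LapNN: "(1 - Qh) / d \<ge> 0"
    unfolding LapI[symmetric]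
    by (rule integral_nonneg_AE) (use AEpos in \<open>eventually_elim, use dx d_pos in simp\<close>)
  have N_eq: "N = lam * ((1 - Qh) / d)"
  proof -
    have "(\<integral>\<^sup>+ r. ennreal (\<rho>0 r) \<partial>lborel)
        = (\<integral>\<^sup>+ r. ennreal (indicator {0..} r * exp (- d * r) * \<rho>0 r) + ennreal d * (ennreal (\<rho>0 r) * ennreal ((1 - exp (- d * r)) / d)) \<partial>lborel)"
    proof (rule nn_integral_cong)
      fix r :: real
      show "ennreal (\<rho>0 r) = ennreal (indicator {0..} r * exp (- d * r) * \<rho>0 r) + ennreal d * (ennreal (\<rho>0 r) * ennreal ((1 - exp (- d * r)) / d))"
      proof (cases "r \<ge> 0")
        case True
        have e1: "exp (- d * r) \<le> 1" using exple[OF True] .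
        have a: "ennreal d * (ennreal (\<rho>0 r) * ennreal ((1 - exp (- d * r)) / d)) = ennreal (d * (\<rho>0 r * ((1 - exp (- d * r)) / d)))"
        proof -
          have n1: "(1 - exp (- d * r)) / d \<ge> 0" using e1 d_pos by simp
          have "ennreal (d * (\<rho>0 r * ((1 - exp (- d * r)) / d))) = ennreal d * ennreal (\<rho>0 r * ((1 - exp (- d * r)) / d))"
            using d_pos mult_nonneg_nonneg[OF \<rho>0_nn n1] by (intro ennreal_mult) auto
          also have "ennreal (\<rho>0 r * ((1 - exp (- d * r)) / d)) = ennreal (\<rho>0 r) * ennreal ((1 - exp (- d * r)) / d)"
            using n1 \<rho>0_nn[of r] by (intro ennreal_mult) auto
          finally show ?thesis by simp
        qed
        have b: "ennreal (indicator {0..} r * exp (- d * r) * \<rho>0 r) + ennreal (d * (\<rho>0 r * ((1 - exp (- d * r)) / d)))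
           = ennreal (indicator {0..} r * exp (- d * r) * \<rho>0 r + d * (\<rho>0 r * ((1 - exp (- d * r)) / d)))"
          using d_pos e1 \<rho>0_nn[of r] True by (intro ennreal_plus[symmetric]) auto
        have c: "indicator {0..} r * exp (- d * r) * \<rho>0 r + d * (\<rho>0 r * ((1 - exp (- d * r)) / d)) = \<rho>0 r"
          using d_pos True by (simp add: field_simps)
        show ?thesis using a b c by simp
      next
        case False
        then show ?thesis by (simp add: \<rho>0_def)
      qed
    qed
    also have "\<dots> = (\<integral>\<^sup>+ r. ennreal (indicator {0..} r * exp (- d * r) * \<rho>0 r) \<partial>lborel)
       + ennreal d * (\<integral>\<^sup>+ a. ennreal (\<rho>0 a) * ennreal ((1 - exp (- d * a)) / d) \<partial>lborel)"
      by (subst nn_integral_add, measurable, subst nn_integral_cmult, measurable)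
    finally have "ennreal N = ennreal lam * ennreal ((1 - Qh) / d)" using E3 Nn Lapn by simp
    also have "\<dots> = ennreal (lam * ((1 - Qh) / d))" using lam_pos LapNN by (intro ennreal_mult[symmetric]) auto
    finally have "ennreal N = ennreal (lam * ((1 - Qh) / d))" .
    moreover have "lam * ((1 - Qh) / d) \<ge> 0" using mult_nonneg_nonneg[OF _ LapNN, of lam] lam_pos by simp
    ultimately show ?thesis using N_pos by (subst (asm) ennreal_inj) (auto simp: N_def)
  qed
  define f2 where "f2 = (\<lambda>a. indicator {0..} a *\<^sub>R (a * \<rho> a))"
  have f2_eq: "f2 = (\<lambda>a. a * \<rho>0 a)" by (auto simp: fun_eq_iff f2_def \<rho>0_def)
  have f2_meas[measurable]: "f2 \<in> borel_measurable lborel" unfolding f2_eq by measurable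
  have f2_nn: "f2 a \<ge> 0" for a by (simp add: f2_def indicator_def \<rho>_nonneg)
  have M_eq: "(\<integral>\<^sup>+ a. ennreal (\<rho>0 a) * ennreal a \<partial>lborel) = (\<integral>\<^sup>+ a. ennreal (f2 a) \<partial>lborel)"
  proof (rule nn_integral_cong)
    fix a :: real
    show "ennreal (\<rho>0 a) * ennreal a = ennreal (f2 a)"
      by (cases "a \<ge> 0") (auto simp: f2_eq \<rho>0_def ennreal_mult' mult.commute \<rho>_nonneg)
  qed
  have one_eq: "(\<integral>\<^sup>+ r. ennreal (indicator {0..} r * 1 * \<rho>0 r) \<partial>lborel) = ennreal N"
    unfolding Nn[symmetric] by (rule nn_integral_cong) (simp add: \<rho>0_def indicator_def)
  have E2': "ennreal N + ennreal d * (\<integral>\<^sup>+ a. ennreal (f2 a) \<partial>lborel) = ennreal (lam * Eq)"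
    using E2 unfolding one_eq M_eq Eqn using lam_pos Eq0 by (simp add: ennreal_mult)
  have fin: "(\<integral>\<^sup>+ a. ennreal (f2 a) \<partial>lborel) \<noteq> \<top>"
  proof
    assume "(\<integral>\<^sup>+ a. ennreal (f2 a) \<partial>lborel) = \<top>"
    then have "ennreal N + ennreal d * (\<integral>\<^sup>+ a. ennreal (f2 a) \<partial>lborel) = \<top>"
      using d_pos by (simp add: ennreal_mult_top)
    with E2' show False by simp
  qed
  then obtain Mx where Mx: "(\<integral>\<^sup>+ a. ennreal (f2 a) \<partial>lborel) = ennreal Mx"
    using ennreal_cases[of "(\<integral>\<^sup>+ a. ennreal (f2 a) \<partial>lborel)"] by auto
  have int2: "integrable lborel f2"
    by (rule integrableI_nn_integral_finite[OF f2_meas _ Mx]) (simp add: f2_nn)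
  have si: "set_integrable lborel {0..} (\<lambda>r. r * \<rho> r)"
    using int2 by (simp add: set_integrable_def f2_def)
  define Mr where "Mr = (LBINT r:{0..}. r * \<rho> r)"
  have Mr_eq: "Mr = integral\<^sup>L lborel f2" by (simp add: Mr_def set_lebesgue_integral_def f2_def)
  have Mrn: "(\<integral>\<^sup>+ a. ennreal (f2 a) \<partial>lborel) = ennreal Mr"
    unfolding Mr_eq by (rule nn_integral_eq_integral[OF int2]) (simp add: f2_nn)
  have Mr0: "Mr \<ge> 0" unfolding Mr_eq by (rule integral_nonneg_AE) (simp add: f2_nn)
  have "ennreal (N + d * Mr) = ennreal (lam * Eq)"
    using E2' unfolding Mrn using N_pos Mr0 d_pos
    by (simp add: ennreal_mult ennreal_plus N_def)
  hence main: "N + d * Mr = lam * Eq"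
    using N_pos Mr0 d_pos lam_pos Eq0 by (subst (asm) ennreal_inj) (auto simp: N_def)
  have Qp: "1 - Qh > 0"
  proof -
    have "lam * ((1 - Qh) / d) > 0" using N_eq N_pos by (simp add: N_def)
    then show ?thesis using lam_pos d_pos by (simp add: zero_less_mult_iff zero_less_divide_iff)
  qed
  have "Mr / N = Eq / (1 - Qh) - 1 / d"
  proof -
    have Mr': "Mr = (lam * Eq - N) / d" using main d_pos by (simp add: field_simps)
    show ?thesis unfolding Mr' N_eq using d_pos lam_pos Qp by (simp add: field_simps)
  qed
  then show ?thesis using si by (simp add: Mr_def N_def Eq_def Qh_def)
qed

end
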